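(* Let $V$ be an $n$-dimensional vector space over $\mathbb{F}_q$ with $n\ge 4$, let $Y$ be a set of transvections in $\mathrm{SL}(V)$ and $H=\langle Y\rangle$. Then $H$ acts irreducibly on $V$ if and only if the following three conditions hold: (1) ${}_VY$ spans $V$; (2) $Y_{V^*}$ spans $V^*$; (3) the transvection graph $\Gamma(Y)$ is strongly connected.
   Context: Every transvection can be written as $1+u\otimes\phi$, i.e. $x\mapsto x+\phi(x)u$, with $0\ne u\in V$, $0\ne\phi\in V^*$, $\phi(u)=0$. ${}_VY=\{v\in V:\exists\phi\in V^*,\ 1+v\otimes\phi\in Y\}$ and $Y_{V^*}=\{\phi\in V^*:\exists v\in V,\ 1+v\otimes\phi\in Y\}$. The transvection graph $\Gamma(Y)$ is the directed graph with vertex set $Y$ and a directed edge from $s=1+u\otimes\phi$ to $t=1+v\otimes\psi$ iff $\psi(u)\ne 0$ (independent of the chosen representations). Strongly connected means there is a directed path between any two distinct vertices in each direction. *)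

theory Defs
  imports "HOL-Analysis.Analysis"
begin

text \<open>V = F^n with F a finite field and n = CARD('n); V^* identified with F^n via
  the pairing below; linear maps of V are n x n matrices acting by (*v).\<close>

definition pair :: "'a::field^'n \<Rightarrow> 'a^'n \<Rightarrow> 'a" where
  "pair \<phi> x = (\<Sum>i\<in>UNIV. \<phi> $ i * x $ i)"

definition outer :: "'a::field^'n \<Rightarrow> 'a^'n \<Rightarrow> 'a^'n^'n" where
  "outer u \<phi> = (\<chi> i j. u $ i * \<phi> $ j)"

definition transvection :: "'a::field^'n^'n \<Rightarrow> bool" where
  "transvection t \<longleftrightarrow> (\<exists>u \<phi>. u \<noteq> 0 \<and> \<phi> \<noteq> 0 \<and> pair \<phi> u = 0 \<and> t = mat 1 + outer u \<phi>)"

definition left_set :: "('a::field^'n^'n) set \<Rightarrow> ('a^'n) set" where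
  "left_set Y = {v. \<exists>\<phi>. mat 1 + outer v \<phi> \<in> Y}"

definition right_set :: "('a::field^'n^'n) set \<Rightarrow> ('a^'n) set" where
  "right_set Y = {\<phi>. \<exists>v. mat 1 + outer v \<phi> \<in> Y}"

definition tv_edge :: "'a::field^'n^'n \<Rightarrow> 'a^'n^'n \<Rightarrow> bool" where
  "tv_edge s t \<longleftrightarrow> (\<exists>u \<phi> v \<psi>. s = mat 1 + outer u \<phi> \<and> t = mat 1 + outer v \<psi> \<and> pair \<psi> u \<noteq> 0)"

definition tv_graph :: "('a::field^'n^'n) set \<Rightarrow> (('a^'n^'n) \<times> ('a^'n^'n)) set" where
  "tv_graph Y = {(s, t). s \<in> Y \<and> t \<in> Y \<and> tv_edge s t}"

definition strongly_connected :: "('b \<times> 'b) set \<Rightarrow> 'b set \<Rightarrow> bool" where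
  "strongly_connected E Y \<longleftrightarrow> (\<forall>s\<in>Y. \<forall>t\<in>Y. s \<noteq> t \<longrightarrow> (s, t) \<in> E\<^sup>+)"

inductive_set gen_group :: "('a::field^'n^'n) set \<Rightarrow> ('a^'n^'n) set" for Y where
  one: "mat 1 \<in> gen_group Y"
| gen: "t \<in> Y \<Longrightarrow> t \<in> gen_group Y"
| mult: "a \<in> gen_group Y \<Longrightarrow> b \<in> gen_group Y \<Longrightarrow> a ** b \<in> gen_group Y"
| inv: "a \<in> gen_group Y \<Longrightarrow> matrix_inv a \<in> gen_group Y"

definition acts_irreducibly :: "('a::field^'n^'n) set \<Rightarrow> bool" where
  "acts_irreducibly H \<longleftrightarrow>
     (\<forall>W. vec.subspace W \<and> (\<forall>h\<in>H. \<forall>w\<in>W. h *v w \<in> W) \<longrightarrow> W = {0} \<or> W = UNIV)"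

end

theory Submission imports Defs begin

lemma tv_apply: "(mat 1 + outer u \<phi>) *v x = x + pair \<phi> x *s u"
proof -
  have "(mat 1 + outer u \<phi>) *v x = mat 1 *v x + outer u \<phi> *v x"
    by (rule matrix_vector_mult_add_rdistrib)
  moreover have "outer u \<phi> *v x = pair \<phi> x *s u"
    by (simp add: vec_eq_iff outer_def pair_def matrix_vector_mult_def sum_distrib_left algebra_simps)
  ultimately show ?thesis by simp
qed

lemma pair_comm: "pair (\<phi>::'a::field^'n) x = pair x \<phi>"
  by (simp add: pair_def mult.commute)

lemma pair_add: "pair \<phi> (x + y) = pair \<phi> x + pair \<phi> (y::'a::field^'n)"
  by (simp add: pair_def algebra_simps sum.distrib)

lemma pair_scale: "pair \<phi> (c *s x) = c * pair \<phi> (x::'a::field^'n)"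
  by (simp add: pair_def algebra_simps sum_distrib_left)

lemma pair_diff: "pair \<phi> (x - y) = pair \<phi> x - pair \<phi> (y::'a::field^'n)"
  by (simp add: pair_def algebra_simps sum_subtractf)

lemma pair_axis: "pair \<phi> (axis i (1::'a::field)) = \<phi> $ i"
  by (simp add: pair_def axis_def if_distrib cong: if_cong)

lemma pair_span0:
  assumes "\<forall>u\<in>G. pair \<psi> u = 0" "w \<in> vec.span G"
  shows "pair \<psi> (w::'a::field^'n) = 0"
proof -
  have "vec.subspace {x. pair \<psi> x = 0}"
    by (auto simp: vec.subspace_def pair_add pair_scale) (simp add: pair_def)
  then have "vec.span G \<subseteq> {x. pair \<psi> x = 0}"
    using assms(1) by (intro vec.span_minimal) auto
  then show ?thesis using assms(2) by auto
qed

lemma nonzero_axis: assumes "(\<phi>::'a::field^'n) \<noteq> 0" obtains i where "pair \<phi> (axis i 1) \<noteq> 0"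
  using assms by (metis pair_axis vec_eq_iff zero_index)

lemma outer_nz: "u \<noteq> 0 \<Longrightarrow> \<phi> \<noteq> 0 \<Longrightarrow> outer u (\<phi>::'a::field^'n) \<noteq> 0"
  by (auto simp: outer_def vec_eq_iff)

lemma outer_0: "outer 0 \<phi> = 0" "outer u 0 = (0::'a::field^'n^'n)"
  by (auto simp: outer_def vec_eq_iff)

lemma tv_rep_nz:
  assumes "transvection t" "t = mat 1 + outer u \<phi>"
  shows "u \<noteq> 0" "\<phi> \<noteq> (0::'a::field^'n)"
  using assms by (auto simp: transvection_def outer_0 dest: outer_nz)

lemma matrix_inv_eq:
  fixes A B :: "'a::field^'n^'n"
  assumes "A ** B = mat 1" "B ** A = mat 1"
  shows "matrix_inv A = B" "invertible A"
proof -
  have ex: "\<exists>A'. A ** A' = mat 1 \<and> A' ** A = mat 1" using assms by blast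
  have "A ** matrix_inv A = mat 1 \<and> matrix_inv A ** A = mat 1"
    unfolding matrix_inv_def by (rule someI_ex[OF ex])
  then have "matrix_inv A = (matrix_inv A ** A) ** B"
    using assms by (metis matrix_mul_assoc matrix_mul_rid)
  then show "matrix_inv A = B" using \<open>_ \<and> _\<close> by simp
  show "invertible A" using ex invertible_def by blast
qed

lemma tv_inv:
  fixes u \<phi> :: "'a::field^'n"
  assumes "pair \<phi> u = 0"
  shows "matrix_inv (mat 1 + outer u \<phi>) = mat 1 + outer (-u) \<phi>"
        "invertible (mat 1 + outer u \<phi>)"
proof -
  have a: "(mat 1 + outer u \<phi>) ** (mat 1 + outer (-u) \<phi>) = mat 1"
    unfolding matrix_eq
    by (simp add: tv_apply flip: matrix_vector_mul_assoc)
      (simp add: pair_add pair_diff pair_scale assms algebra_simps)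
  have b: "(mat 1 + outer (-u) \<phi>) ** (mat 1 + outer u \<phi>) = mat 1"
    unfolding matrix_eq
    by (simp add: tv_apply flip: matrix_vector_mul_assoc)
      (simp add: pair_add pair_diff pair_scale assms algebra_simps)
  show "matrix_inv (mat 1 + outer u \<phi>) = mat 1 + outer (-u) \<phi>"
        "invertible (mat 1 + outer u \<phi>)" using matrix_inv_eq[OF a b] by auto
qed


lemma inv_props:
  fixes A :: "'a::field^'n^'n"
  assumes "invertible A"
  shows "A ** matrix_inv A = mat 1" "matrix_inv A ** A = mat 1"
proof -
  have ex: "\<exists>A'. A ** A' = mat 1 \<and> A' ** A = mat 1" using assms invertible_def by blast
  have "A ** matrix_inv A = mat 1 \<and> matrix_inv A ** A = mat 1"
    unfolding matrix_inv_def by (rule someI_ex[OF ex])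
  then show "A ** matrix_inv A = mat 1" "matrix_inv A ** A = mat 1" by auto
qed

lemma gen_invariant:
  fixes Y :: "('a::field^'n^'n) set"
  assumes W: "vec.subspace W" and tv: "\<forall>t\<in>Y. transvection t"
    and inv: "\<forall>t\<in>Y. \<forall>w\<in>W. t *v w \<in> W"
  shows "h \<in> gen_group Y \<Longrightarrow> invertible h \<and> (\<forall>w\<in>W. h *v w \<in> W) \<and> (\<forall>w\<in>W. matrix_inv h *v w \<in> W)"
proof (induction h rule: gen_group.induct)
  case one
  have "mat 1 ** mat 1 = (mat 1 :: 'a^'n^'n)" by simp
  from matrix_inv_eq[OF this this] show ?case by simp
next
  case (gen t)
  then obtain u \<phi> where t: "pair \<phi> u = 0" "t = mat 1 + outer u \<phi>"
    using tv by (auto simp: transvection_def)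
  have "matrix_inv t *v w \<in> W" if "w \<in> W" for w
  proof -
    have "matrix_inv t *v w = (w + w) - t *v w"
      using t by (simp only: tv_inv tv_apply) (simp add: algebra_simps)
    moreover have "(w + w) - t *v w \<in> W" using that inv gen W
      by (intro vec.subspace_diff vec.subspace_add) auto
    ultimately show ?thesis by simp
  qed
  then show ?case using t tv_inv gen inv by auto
next
  case (mult a b)
  have ia: "a ** matrix_inv a = mat 1" "matrix_inv a ** a = mat 1"
    using mult inv_props by blast+
  have ib: "b ** matrix_inv b = mat 1" "matrix_inv b ** b = mat 1"
    using mult inv_props by blast+
  have 1: "(a ** b) ** (matrix_inv b ** matrix_inv a) = mat 1"
    by (metis ia ib matrix_mul_assoc matrix_mul_rid)
  have 2: "(matrix_inv b ** matrix_inv a) ** (a ** b) = mat 1"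
    by (metis ia ib matrix_mul_assoc matrix_mul_rid)
  show ?case using matrix_inv_eq[OF 1 2] mult
    by (simp flip: matrix_vector_mul_assoc)
next
  case (inv a)
  have ia: "a ** matrix_inv a = mat 1" "matrix_inv a ** a = mat 1"
    using inv inv_props by blast+
  show ?case using matrix_inv_eq[OF ia(2) ia(1)] inv by simp
qed

lemma dual:
  fixes R :: "('a::field^'n) set"
  assumes "vec.span R \<noteq> UNIV"
  shows "\<exists>x. x \<noteq> 0 \<and> (\<forall>\<phi>\<in>R. pair \<phi> x = 0)"
proof -
  obtain e where e: "e \<notin> vec.span R" using assms by auto
  obtain B where B: "B \<subseteq> vec.span R" "vec.independent B" "vec.span R \<subseteq> vec.span B"
    by (rule vec.maximal_independent_subset)
  have sB: "vec.span B \<subseteq> vec.span R" using B(1) by (simp add: vec.span_minimal)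
  have eB: "e \<notin> vec.span B" using e sB by auto
  then have "e \<notin> B" using vec.span_base by blast
  have ind: "vec.independent (insert e B)" using vec.independent_insertI[OF eB B(2)] .
  obtain g where g: "Vector_Spaces.linear (*s) (*s) g"
     "\<forall>x\<in>insert e B. g x = (if x = e then e else 0)"
    using vec.linear_independent_extend[OF ind, of "\<lambda>x. if x = e then e else 0"] by blast
  have e0: "e \<noteq> 0" using e vec.span_zero by auto
  have g0: "g x = 0" if "x \<in> vec.span B" for x
  proof -
    have "\<forall>b\<in>B. g b = 0" using g(2) \<open>e \<notin> B\<close> by auto
    then show ?thesis using vec.linear_eq_0_on_span[OF g(1) _ that] by blast
  qed
  define G where "G = matrix g"
  have Gv: "G *v x = g x" for x unfolding G_def by (rule matrix_works[OF g(1)])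
  have "G \<noteq> 0" using Gv[of e] g(2) e0 by auto
  then obtain i where i: "G $ i \<noteq> 0" by (metis vec_eq_iff zero_index)
  have "pair \<phi> (G $ i) = 0" if "\<phi> \<in> R" for \<phi>
  proof -
    have "g \<phi> = 0" using g0 that B(3) vec.span_base by blast
    then have "(G *v \<phi>) $ i = 0" using Gv by simp
    then show ?thesis by (simp add: matrix_vector_mult_def pair_def mult.commute)
  qed
  then show ?thesis using i by blast
qed


lemma tv_rep_in:
  assumes "\<forall>t\<in>Y. transvection t" "t \<in> Y"
  obtains u \<phi> where "t = mat 1 + outer u \<phi>" "u \<noteq> 0" "\<phi> \<noteq> 0" "pair \<phi> u = 0"
  using assms unfolding transvection_def by blast

lemma sufficiency:
  fixes Y :: "('a::field^'n^'n) set"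
  assumes tv: "\<forall>t\<in>Y. transvection t"
    and L: "vec.span (left_set Y) = UNIV" and R: "vec.span (right_set Y) = UNIV"
    and SC: "strongly_connected (tv_graph Y) Y"
  shows "acts_irreducibly (gen_group Y)"
  unfolding acts_irreducibly_def
proof (intro allI impI)
  fix W :: "('a^'n) set"
  assume "vec.subspace W \<and> (\<forall>h\<in>gen_group Y. \<forall>w\<in>W. h *v w \<in> W)"
  then have W: "vec.subspace W" and inv0: "\<forall>h\<in>gen_group Y. \<forall>w\<in>W. h *v w \<in> W" by auto
  have inv: "t *v w \<in> W" if "t \<in> Y" "w \<in> W" for t w
    using inv0 gen_group.gen[OF that(1)] that(2) by blast
  show "W = {0} \<or> W = UNIV"
  proof (cases "W = {0}")
    case True then show ?thesis by simp
  next
    case False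
    then have "W \<noteq> {0}" .
    have "\<exists>w\<in>W. w \<noteq> 0"
    proof (rule ccontr)
      assume "\<not> ?thesis"
      then have "W \<subseteq> {0}" by auto
      then show False using \<open>W \<noteq> {0}\<close> vec.subspace_0[OF W] by auto
    qed
    then obtain w0 where w0: "w0 \<in> W" "w0 \<noteq> 0" by blast
    define Q where "Q t \<longleftrightarrow> (\<exists>w\<in>W. t *v w \<noteq> w)" for t
    have Qrep: "u \<in> W" if qt: "Q t" and teq: "t = mat 1 + outer u \<phi>" and tY: "t \<in> Y" for t u \<phi>
    proof -
      obtain w where w: "w \<in> W" "t *v w \<noteq> w" using qt unfolding Q_def by blast
      have tw: "t *v w = w + pair \<phi> w *s u" using teq tv_apply by simp
      then have c: "pair \<phi> w \<noteq> 0" using w by auto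
      have "t *v w - w \<in> W" using inv[OF tY w(1)] w W vec.subspace_diff by blast
      then have "inverse (pair \<phi> w) *s (t *v w - w) \<in> W" using W vec.subspace_scale by blast
      then show ?thesis using tw c by simp
    qed
    have ex: "\<exists>s\<in>Y. Q s"
    proof (rule ccontr)
      assume "\<not> ?thesis"
      then have fixd: "\<forall>t\<in>Y. \<forall>w\<in>W. t *v w = w" unfolding Q_def by blast
      have "\<forall>\<phi>\<in>right_set Y. pair w0 \<phi> = 0"
      proof
        fix \<phi> assume "\<phi> \<in> right_set Y"
        then obtain v where v: "mat 1 + outer v \<phi> \<in> Y" unfolding right_set_def by blast
        then have "transvection (mat 1 + outer v \<phi>)" using tv by blast
        then have "v \<noteq> 0" using tv_rep_nz(1)[OF _ refl] by blast
        have "pair \<phi> w0 *s v = 0" using fixd v w0 tv_apply[of v \<phi> w0] by simp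
        then have "pair \<phi> w0 = 0" using \<open>v \<noteq> 0\<close> by simp
        then show "pair w0 \<phi> = 0" by (simp add: pair_comm)
      qed
      then have all0: "pair w0 \<phi> = 0" for \<phi>
        using pair_span0[of "right_set Y" w0 \<phi>] R by blast
      obtain i where "pair w0 (axis i 1) \<noteq> 0" using nonzero_axis[OF w0(2)] by blast
      then show False using all0 by blast
    qed
    have edgeQ: "Q t" if "(s, t) \<in> tv_graph Y" "Q s" for s t
    proof -
      from that obtain u \<phi> v \<psi> where e: "s = mat 1 + outer u \<phi>" "t = mat 1 + outer v \<psi>"
        "pair \<psi> u \<noteq> 0" "s \<in> Y" "t \<in> Y"
        unfolding tv_graph_def tv_edge_def by blast
      have "u \<in> W" using Qrep[OF that(2) e(1) e(4)] .
      have "transvection t" using tv e by blast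
      then have "v \<noteq> 0" using tv_rep_nz(1) e(2) by blast
      have "t *v u \<noteq> u" using e \<open>v \<noteq> 0\<close> tv_apply[of v \<psi> u] by simp
      then show ?thesis using \<open>u \<in> W\<close> Q_def by blast
    qed
    have path: "Q s \<longrightarrow> Q t" if "(s, t) \<in> (tv_graph Y)\<^sup>+" for s t
      using that
    proof (induction rule: trancl_induct)
      case (base y)
      then show ?case using edgeQ by blast
    next
      case (step y z)
      then show ?case using edgeQ by blast
    qed
    obtain s0 where s0: "s0 \<in> Y" "Q s0" using ex by blast
    have allQ: "Q t" if "t \<in> Y" for t
    proof (cases "t = s0")
      case True then show ?thesis using s0 by simp
    next
      case False
      have "\<forall>s\<in>Y. \<forall>t\<in>Y. s \<noteq> t \<longrightarrow> (s, t) \<in> (tv_graph Y)\<^sup>+"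
        using SC unfolding strongly_connected_def .
      then have st: "(s0, t) \<in> (tv_graph Y)\<^sup>+" using s0(1) that False by simp
      show ?thesis using path[OF st] s0(2) by simp
    qed
    have "left_set Y \<subseteq> W"
    proof
      fix v assume "v \<in> left_set Y"
      then obtain \<phi> where t: "mat 1 + outer v \<phi> \<in> Y" unfolding left_set_def by blast
      show "v \<in> W" using Qrep[OF allQ[OF t] refl t] .
    qed
    then have "vec.span (left_set Y) \<subseteq> W" using W vec.span_minimal by blast
    then show ?thesis using L by auto
  qed
qed

lemma irr_inv:
  fixes Y :: "('a::field^'n^'n) set"
  assumes irr: "acts_irreducibly (gen_group Y)" and tv: "\<forall>t\<in>Y. transvection t"
    and W: "vec.subspace W" and inv: "\<forall>t\<in>Y. \<forall>w\<in>W. t *v w \<in> W"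
  shows "W = {0} \<or> W = UNIV"
proof -
  have "\<forall>h\<in>gen_group Y. \<forall>w\<in>W. h *v w \<in> W" using gen_invariant[OF W tv inv] by blast
  then show ?thesis using irr W unfolding acts_irreducibly_def by blast
qed


lemma nec_nonempty:
  fixes Y :: "('a::field^'n^'n) set"
  assumes card: "CARD('n) \<ge> 2" and irr: "acts_irreducibly (gen_group Y)"
    and tv: "\<forall>t\<in>Y. transvection t"
  shows "Y \<noteq> {}"
proof
  assume Y: "Y = {}"
  obtain k :: 'n where True by simp
  have "(UNIV :: 'n set) \<noteq> {k}" using card by (metis card_1_singleton_iff numeral_le_one_iff semiring_norm(69) One_nat_def card.empty card.insert finite.emptyI empty_iff le_antisym one_le_numeral)
  then obtain j :: 'n where j: "j \<noteq> k" by blast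
  define W :: "('a^'n) set" where "W = vec.span {axis k 1}"
  have "W = {0} \<or> W = UNIV"
    using irr_inv[OF irr tv, of W] Y unfolding W_def by simp
  moreover have "axis k 1 \<in> W" unfolding W_def by (simp add: vec.span_base)
  moreover have "axis k (1::'a) \<noteq> 0" by (simp add: vec_eq_iff axis_def)
  moreover have "axis j (1::'a) \<notin> W"
  proof
    assume "axis j 1 \<in> W"
    then obtain c where "axis j (1::'a) = c *s axis k 1" unfolding W_def vec.span_singleton by blast
    then have "axis j (1::'a) $ j = (c *s axis k 1) $ j" by simp
    then show False using j by (simp add: axis_def)
  qed
  ultimately show False by auto
qed

theorem theorem3p1:
  fixes Y :: "('a::{field,finite}^'n^'n) set"
  assumes "CARD('n) \<ge> 4"
    and "\<forall>t\<in>Y. transvection t \<and> det t = 1"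
  shows "acts_irreducibly (gen_group Y) \<longleftrightarrow>
           vec.span (left_set Y) = UNIV \<and> vec.span (right_set Y) = UNIV \<and>
           strongly_connected (tv_graph Y) Y"
proof -
  have tv: "\<forall>t\<in>Y. transvection t" using assms(2) by blast
  have card: "CARD('n) \<ge> 2" using assms(1) by simp
  show ?thesis
  proof
    assume irr: "acts_irreducibly (gen_group Y)"
    have ne: "Y \<noteq> {}" using nec_nonempty[OF card irr tv] .
    then obtain t0 where t0: "t0 \<in> Y" by blast
    then obtain u0 \<phi>0 where r0: "t0 = mat 1 + outer u0 \<phi>0" "u0 \<noteq> 0" "\<phi>0 \<noteq> 0" "pair \<phi>0 u0 = 0"
      using tv_rep_in[OF tv] by blast
    have L: "vec.span (left_set Y) = UNIV"
    proof -
      let ?W = "vec.span (left_set Y)"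
      have inv: "\<forall>t\<in>Y. \<forall>w\<in>?W. t *v w \<in> ?W"
      proof (intro ballI)
        fix t w assume t: "t \<in> Y" and w: "w \<in> ?W"
        obtain u \<phi> where r: "t = mat 1 + outer u \<phi>" using tv_rep_in[OF tv t] by blast
        have "u \<in> left_set Y" using t r unfolding left_set_def by blast
        then have "u \<in> ?W" by (rule vec.span_base)
        then have "w + pair \<phi> w *s u \<in> ?W"
          using w by (intro vec.subspace_add vec.subspace_scale vec.subspace_span) auto
        then show "t *v w \<in> ?W" using r by (simp add: tv_apply)
      qed
      have "u0 \<in> left_set Y" using t0 r0 unfolding left_set_def by blast
      then have "u0 \<in> ?W" by (rule vec.span_base)
      then have "?W \<noteq> {0}" using r0(2) by blast
      then show ?thesis using irr_inv[OF irr tv vec.subspace_span inv] by blast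
    qed
    have R: "vec.span (right_set Y) = UNIV"
    proof -
      define W where "W = {x. \<forall>\<phi>\<in>right_set Y. pair \<phi> x = 0}"
      have sub: "vec.subspace W"
        unfolding vec.subspace_def W_def
        by (auto simp: pair_add pair_scale) (simp add: pair_def)
      have inv: "\<forall>t\<in>Y. \<forall>w\<in>W. t *v w \<in> W"
      proof (intro ballI)
        fix t w assume t: "t \<in> Y" and w: "w \<in> W"
        obtain u \<phi> where r: "t = mat 1 + outer u \<phi>" using tv_rep_in[OF tv t] by blast
        have "\<phi> \<in> right_set Y" using t r unfolding right_set_def by blast
        then have "pair \<phi> w = 0" using w unfolding W_def by blast
        then show "t *v w \<in> W" using r w by (simp add: tv_apply)
      qed
      have "\<phi>0 \<in> right_set Y" using t0 r0 unfolding right_set_def by blast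
      obtain i where i: "pair \<phi>0 (axis i 1) \<noteq> 0" using nonzero_axis[OF r0(3)] by blast
      have "axis i 1 \<notin> W" using i \<open>\<phi>0 \<in> right_set Y\<close> unfolding W_def by blast
      then have W0: "W = {0}" using irr_inv[OF irr tv sub inv] by blast
      show ?thesis
      proof (rule ccontr)
        assume "vec.span (right_set Y) \<noteq> UNIV"
        from dual[OF this] obtain x where "x \<noteq> 0" "\<forall>\<phi>\<in>right_set Y. pair \<phi> x = 0" by blast
        then have "x \<in> W" "x \<noteq> 0" unfolding W_def by auto
        then show False using W0 by blast
      qed
    qed
    have SC: "strongly_connected (tv_graph Y) Y"
      unfolding strongly_connected_def
    proof (intro ballI impI)
      fix s t assume s: "s \<in> Y" and t: "t \<in> Y" and st: "s \<noteq> t"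
      show "(s, t) \<in> (tv_graph Y)\<^sup>+"
      proof (rule ccontr)
        assume nst: "(s, t) \<notin> (tv_graph Y)\<^sup>+"
        define A where "A = {a \<in> Y. a = s \<or> (s, a) \<in> (tv_graph Y)\<^sup>+}"
        define G where "G = {u. \<exists>a\<in>A. \<exists>\<phi>. a = mat 1 + outer u \<phi>}"
        define W where "W = vec.span G"
        have K: "pair \<psi> w = 0" if b: "b \<in> Y" "b \<notin> A" "b = mat 1 + outer v \<psi>" and w: "w \<in> W"
          for b v \<psi> w
        proof -
          have "\<forall>u\<in>G. pair \<psi> u = 0"
          proof
            fix u assume "u \<in> G"
            then obtain a \<phi> where a: "a \<in> A" "a = mat 1 + outer u \<phi>" unfolding G_def by blast
            show "pair \<psi> u = 0"
            proof (rule ccontr)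
              assume "pair \<psi> u \<noteq> 0"
              then have "tv_edge a b" unfolding tv_edge_def using a(2) b(3) by blast
              then have e: "(a, b) \<in> tv_graph Y" using a(1) b(1) unfolding tv_graph_def A_def by blast
              have "a = s \<or> (s, a) \<in> (tv_graph Y)\<^sup>+" using a(1) unfolding A_def by blast
              then have "(s, b) \<in> (tv_graph Y)\<^sup>+"
              proof
                assume "a = s" then show ?thesis using e by blast
              next
                assume "(s, a) \<in> (tv_graph Y)\<^sup>+" then show ?thesis using e by (rule trancl_into_trancl)
              qed
              then have "b \<in> A" using b(1) unfolding A_def by blast
              then show False using b(2) by blast
            qed
          qed
          moreover have "w \<in> vec.span G" using w unfolding W_def .
          ultimately show ?thesis by (rule pair_span0)
        qed
        have inv: "\<forall>b\<in>Y. \<forall>w\<in>W. b *v w \<in> W"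
        proof (intro ballI)
          fix b w assume b: "b \<in> Y" and w: "w \<in> W"
          obtain v \<psi> where r: "b = mat 1 + outer v \<psi>" using tv_rep_in[OF tv b] by blast
          show "b *v w \<in> W"
          proof (cases "b \<in> A")
            case True
            then have "v \<in> G" unfolding G_def using r by auto
            then have "v \<in> W" unfolding W_def by (rule vec.span_base)
            then have "w + pair \<psi> w *s v \<in> W"
              using w unfolding W_def by (intro vec.subspace_add vec.subspace_scale vec.subspace_span) auto
            then show ?thesis using r by (simp add: tv_apply)
          next
            case False
            have "pair \<psi> w = 0" by (rule K[OF b False r w])
            then show ?thesis using r w by (simp add: tv_apply)
          qed
        qed
        obtain u1 \<phi>1 where r1: "s = mat 1 + outer u1 \<phi>1" "u1 \<noteq> 0" "\<phi>1 \<noteq> 0" "pair \<phi>1 u1 = 0"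
          by (rule tv_rep_in[OF tv s])
        have "s \<in> A" using s unfolding A_def by blast
        then have "u1 \<in> G" unfolding G_def using r1(1) by auto
        then have "u1 \<in> W" unfolding W_def by (rule vec.span_base)
        then have Wn0: "W \<noteq> {0}" using r1(2) by auto
        obtain v2 \<psi>2 where r2: "t = mat 1 + outer v2 \<psi>2" "v2 \<noteq> 0" "\<psi>2 \<noteq> 0" "pair \<psi>2 v2 = 0"
          by (rule tv_rep_in[OF tv t])
        have "t \<notin> A" using st nst unfolding A_def by blast
        obtain i where i: "pair \<psi>2 (axis i 1) \<noteq> 0" using nonzero_axis[OF r2(3)] by blast
        have "axis i 1 \<notin> W" using K[OF t \<open>t \<notin> A\<close> r2(1)] i by blast
        then have "W \<noteq> UNIV" by blast
        moreover have "vec.subspace W" unfolding W_def by simp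
        ultimately show False using Wn0 irr_inv[OF irr tv _ inv] by blast
      qed
    qed
    show "vec.span (left_set Y) = UNIV \<and> vec.span (right_set Y) = UNIV \<and>
           strongly_connected (tv_graph Y) Y" using L R SC by blast
  next
    assume "vec.span (left_set Y) = UNIV \<and> vec.span (right_set Y) = UNIV \<and>
           strongly_connected (tv_graph Y) Y"
    then show "acts_irreducibly (gen_group Y)" using sufficiency[OF tv] by blast
  qed
qed

end
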